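(* Let $R>r>0$, $\Omega=B_R\setminus\overline{B_r}$, $q=\frac1{2r}-\frac1{2R}$, and let $\varphi\in L^2_0(\partial\Omega)$. Then $$PU(\mathcal{K}^*_{\partial\Omega}[\varphi])(k)=\frac12e^{-|k|q}\begin{bmatrix}-1&0\\0&1\end{bmatrix}P\,(U\varphi)(k)\quad\text{for a.e. } k\in\mathbb{R}.$$
   Context: Identify $\mathbb{R}^2$ with $\mathbb{C}$ and let $\Psi(z)=1/z$. For $a\in\mathbb{R}\setminus\{0\}$, $B_a$ is the open disk of radius $|a|$ centered at $(a,0)$. $\Psi$ maps $\partial B_R\setminus\{0\}$ onto the line $\{x=\frac1{2R}\}$ and $\partial B_r\setminus\{0\}$ onto $\{x=\frac1{2r}\}$. For $a>0$ let $h_a(y)=1/((2a)^{-2}+y^2)$. For a function $\varphi$ on $\partial\Omega=\partial B_R\cup\partial B_r$ put $\varphi_R(t)=\varphi(\Psi(\frac1{2R},t))$, $\varphi_r(t)=\varphi(\Psi(\frac1{2r},t))$, $t\in\mathbb{R}$; arclength is $d\sigma=h_R(t)dt$ on $\partial B_R$ and $h_r(t)dt$ on $\partial B_r$. $L^2_0(\partial\Omega)=\{\varphi\in L^2(\partial\Omega,d\sigma):\int_{\partial\Omega}\varphi\,d\sigma=0\}$. Fourier transform: $\mathcal{F}(g)(k)=\frac1{\sqrt{2\pi}}\int_{\mathbb{R}}g(y)e^{-iky}dy$; $U\varphi=(\mathcal{F}(h_R\varphi_R),\mathcal{F}(h_r\varphi_r))^T$; $P=\frac1{\sqrt2}\begin{bmatrix}-1&1\\1&1\end{bmatrix}$.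 The Neumann–Poincaré operator on $\partial\Omega$ (normal $\nu$ outward from $\Omega$: outward from $B_R$ on $\partial B_R$, into $B_r$ on $\partial B_r$) is given for $\varphi\in L^2(\partial\Omega)$ by $$\mathcal{K}^*_{\partial\Omega}[\varphi](\Psi(\tfrac1{2R},y))=\frac1{4\pi R}\int_{\partial\Omega}\varphi\,d\sigma+\frac1{2\pi h_R(y)}\int_{\mathbb{R}}\frac{q}{q^2+(y-t)^2}\varphi_r(t)h_r(t)\,dt,$$ $$\mathcal{K}^*_{\partial\Omega}[\varphi](\Psi(\tfrac1{2r},y))=-\frac1{4\pi r}\int_{\partial\Omega}\varphi\,d\sigma+\frac1{2\pi h_r(y)}\int_{\mathbb{R}}\frac{q}{q^2+(y-t)^2}\varphi_R(t)h_R(t)\,dt.$$ (This is $\mathcal{K}^*_{\partial B_R}[\varphi_R]+\partial_\nu\mathcal{S}_{\partial B_r}[\varphi_r]$ on $\partial B_R$ and $\partial_\nu\mathcal{S}_{\partial B_R}[\varphi_R]+\mathcal{K}^*_{\partial B_r}[\varphi_r]$ on $\partial B_r$, where $\mathcal{S}_{\partial B}[\psi](x)=\frac1{2\pi}\int_{\partial B}\ln|x-y|\psi(y)d\sigma(y)$.) *)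

theory Defs
  imports "HOL-Analysis.Analysis"
begin

definition Psi :: "real \<Rightarrow> real \<Rightarrow> complex" where
  "Psi x t = inverse (Complex x t)"

definition circ :: "real \<Rightarrow> complex set" where
  "circ a = sphere (complex_of_real a) \<bar>a\<bar>"

definition hfun :: "real \<Rightarrow> real \<Rightarrow> real" where
  "hfun a y = 1 / ((2 * a) powi (-2) + y ^ 2)"

definition pull :: "real \<Rightarrow> (complex \<Rightarrow> complex) \<Rightarrow> real \<Rightarrow> complex" where
  "pull a \<phi> t = \<phi> (Psi (1 / (2 * a)) t)"

text \<open>Membership in L^2(d sigma) on dB_R \<union> dB_r, with d sigma = h_R dt resp. h_r dt.\<close>
definition L2_bdry :: "real \<Rightarrow> real \<Rightarrow> (complex \<Rightarrow> complex) \<Rightarrow> bool" where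
  "L2_bdry R r \<phi> \<longleftrightarrow>
     pull R \<phi> \<in> borel_measurable lborel \<and> pull r \<phi> \<in> borel_measurable lborel \<and>
     integrable lborel (\<lambda>t. (cmod (pull R \<phi> t))\<^sup>2 * hfun R t) \<and>
     integrable lborel (\<lambda>t. (cmod (pull r \<phi> t))\<^sup>2 * hfun r t)"

text \<open>Integral over dOmega with respect to arclength.\<close>
definition bdry_int :: "real \<Rightarrow> real \<Rightarrow> (complex \<Rightarrow> complex) \<Rightarrow> complex" where
  "bdry_int R r \<phi> =
     (LINT t|lborel. pull R \<phi> t * complex_of_real (hfun R t)) +
     (LINT t|lborel. pull r \<phi> t * complex_of_real (hfun r t))"

definition L2_0_bdry :: "real \<Rightarrow> real \<Rightarrow> (complex \<Rightarrow> complex) \<Rightarrow> bool" where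
  "L2_0_bdry R r \<phi> \<longleftrightarrow> L2_bdry R r \<phi> \<and> bdry_int R r \<phi> = 0"

text \<open>Neumann--Poincare operator on dOmega, via the given formulas
  (q = 1/(2r) - 1/(2R)); the value at 0 and off dOmega is irrelevant (set to 0).\<close>
definition Kstar :: "real \<Rightarrow> real \<Rightarrow> (complex \<Rightarrow> complex) \<Rightarrow> complex \<Rightarrow> complex" where
  "Kstar R r \<phi> z =
    (let q = 1 / (2 * r) - 1 / (2 * R); y = Im (inverse z) in
     if z \<in> circ R - {0} then
       complex_of_real (1 / (4 * pi * R)) * bdry_int R r \<phi> +
       complex_of_real (1 / (2 * pi * hfun R y)) *
         (LINT t|lborel. complex_of_real (q / (q\<^sup>2 + (y - t)\<^sup>2)) * pull r \<phi> t
                           * complex_of_real (hfun r t))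
     else if z \<in> circ r - {0} then
       - complex_of_real (1 / (4 * pi * r)) * bdry_int R r \<phi> +
       complex_of_real (1 / (2 * pi * hfun r y)) *
         (LINT t|lborel. complex_of_real (q / (q\<^sup>2 + (y - t)\<^sup>2)) * pull R \<phi> t
                           * complex_of_real (hfun R t))
     else 0)"

definition fourier :: "(real \<Rightarrow> complex) \<Rightarrow> real \<Rightarrow> complex" where
  "fourier g k = complex_of_real (1 / sqrt (2 * pi)) *
     (LINT y|lborel. g y * exp (- \<i> * complex_of_real (k * y)))"

definition Uop :: "real \<Rightarrow> real \<Rightarrow> (complex \<Rightarrow> complex) \<Rightarrow> real \<Rightarrow> complex ^ 2" where
  "Uop R r \<phi> k = vector
     [fourier (\<lambda>t. complex_of_real (hfun R t) * pull R \<phi> t) k,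
      fourier (\<lambda>t. complex_of_real (hfun r t) * pull r \<phi> t) k]"

definition Pmat :: "complex ^ 2 ^ 2" where
  "Pmat = (1 / sqrt 2) *\<^sub>R vector [vector [-1, 1], vector [1, 1]]"

definition Jmat :: "complex ^ 2 ^ 2" where
  "Jmat = vector [vector [-1, 0], vector [0, 1]]"

end

theory Submission
  imports Defs "HOL-Probability.Sinc_Integral"
begin


lemma cauchy_std:
  shows "integrable lborel (\<lambda>x::real. inverse (1 + x^2))"
    and "(LINT x|lborel. inverse (1 + x^2)) = pi"
proof -
  show "integrable lborel (\<lambda>x::real. inverse (1 + x^2))"
    using integrable_inverse_1_plus_square by (simp add: set_integrable_def)
  show "(LINT x|lborel. inverse (1 + x^2)) = pi"
    using LBINT_inverse_1_plus_square
    by (simp add: interval_lebesgue_integral_def set_lebesgue_integral_def)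
qed

definition Pk :: "real \<Rightarrow> real \<Rightarrow> real" where
  "Pk q x = q / (q^2 + x^2)"

lemma Pk_scale: "q > 0 \<Longrightarrow> Pk q (q * u) = inverse (1 + u^2) / q"
proof -
  assume q: "q > 0"
  have "q^2 + (q*u)^2 = q^2*(1+u^2)" by algebra
  moreover have X: "1 + u^2 \<noteq> 0" using zero_le_power2[of u] by linarith
  ultimately have "Pk q (q*u) = q / (q^2*(1+u^2))" by (simp add: Pk_def)
  also have "\<dots> = inverse (1+u^2) / q" using q X by (simp add: power2_eq_square divide_simps)
  finally show ?thesis .
qed

lemma Pk_integrable: "q > 0 \<Longrightarrow> integrable lborel (Pk q)"
proof -
  assume q: "q > 0"
  have "integrable lborel (\<lambda>u. inverse (1 + u^2) / q)"
    using cauchy_std(1) by simp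
  then have "integrable lborel (\<lambda>u. Pk q (q * u))"
    using q by (simp add: Pk_scale)
  then show ?thesis using lborel_integrable_real_affine_iff[of q "Pk q" 0] q by simp
qed

lemma Pk_integral: "q > 0 \<Longrightarrow> (LINT x|lborel. Pk q x) = pi"
proof -
  assume q: "q > 0"
  have "(LINT x|lborel. Pk q x) = \<bar>q\<bar> *\<^sub>R (LINT u|lborel. Pk q (0 + q * u))"
    by (rule lborel_integral_real_affine) (use q in auto)
  also have "\<dots> = q * (LINT u|lborel. inverse (1 + u^2) / q)"
    using q by (simp add: Pk_scale)
  also have "\<dots> = pi" using q cauchy_std(2) by simp
  finally show ?thesis .
qed

lemma Pk_nonneg: "q > 0 \<Longrightarrow> Pk q x \<ge> 0"
  by (simp add: Pk_def add_pos_nonneg)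

lemma Pk_le: "q > 0 \<Longrightarrow> Pk q x \<le> 1 / q"
proof -
  assume q: "q > 0"
  have "q * q \<le> q^2 + x^2" by (simp add: power2_eq_square)
  moreover have "q^2 + x^2 > 0" using q by (simp add: add_pos_nonneg)
  ultimately show ?thesis using q by (simp add: Pk_def divide_simps)
qed




lemma exp_abs_bound:
  fixes a x :: real assumes a: "a > 0"
  shows "exp (- a * \<bar>x\<bar>) \<le> (1 / min 1 (a^2/4)) * inverse (1 + x^2)"
proof -
  define m where "m = min 1 (a^2/4)"
  have m: "m > 0" using a by (simp add: m_def)
  have e2: "exp (a * \<bar>x\<bar>) = (exp (a * \<bar>x\<bar> / 2))^2"
    by (simp add: power2_eq_square flip: exp_add)
  have "1 + a * \<bar>x\<bar> / 2 \<le> exp (a * \<bar>x\<bar> / 2)" by (rule exp_ge_add_one_self)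
  then have "(1 + a * \<bar>x\<bar> / 2)^2 \<le> (exp (a * \<bar>x\<bar> / 2))^2"
    using a by (intro power_mono) auto
  moreover have "1 + a^2 * x^2 / 4 \<le> (1 + a * \<bar>x\<bar> / 2)^2"
    using a by (simp add: power2_eq_square algebra_simps)
  moreover have "m * (1 + x^2) \<le> 1 + a^2 * x^2 / 4"
  proof -
    have "m \<le> 1" "m \<le> a^2/4" by (auto simp: m_def)
    then have "m * x^2 \<le> a^2/4 * x^2" by (intro mult_right_mono) auto
    then show ?thesis using \<open>m \<le> 1\<close> by (simp add: algebra_simps)
  qed
  ultimately have le: "m * (1 + x^2) \<le> exp (a * \<bar>x\<bar>)" using e2 by linarith
  have pos: "0 < m * (1 + x^2)" using m by (simp add: add_pos_nonneg)
  have "exp (- a * \<bar>x\<bar>) = inverse (exp (a * \<bar>x\<bar>))" by (simp add: exp_minus)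
  also have "\<dots> \<le> inverse (m * (1 + x^2))" using le pos by (intro le_imp_inverse_le) auto
  also have "\<dots> = (1/m) * inverse (1 + x^2)" by (simp add: inverse_mult_distrib divide_inverse mult.commute)
  finally show ?thesis by (simp add: m_def)
qed

lemma cauchy_std_int: "integrable lborel (\<lambda>x::real. inverse (1 + x^2))"
    using integrable_inverse_1_plus_square by (simp add: set_integrable_def)

lemma exp_abs_integrable:
  fixes a :: real assumes a: "a > 0"
  shows "integrable lborel (\<lambda>x. exp (- a * \<bar>x\<bar>))"
proof (rule Bochner_Integration.integrable_bound)
  show "integrable lborel (\<lambda>x. (1 / min 1 (a^2/4)) * inverse (1 + x^2))"
    using cauchy_std_int by simp
  show "AE x in lborel. norm (exp (- a * \<bar>x\<bar>)) \<le> norm ((1 / min 1 (a^2/4)) * inverse (1 + x^2))"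
    using exp_abs_bound[OF a] by (auto intro!: AE_I2 simp: add_pos_nonneg order_trans[OF _ abs_ge_self])
qed simp

definition gE :: "real \<Rightarrow> real \<Rightarrow> real \<Rightarrow> complex" where
  "gE a b x = complex_of_real (exp (- a * \<bar>x\<bar>)) * exp (\<i> * complex_of_real (b * x))"

lemma gE_integrable: "a > 0 \<Longrightarrow> integrable lborel (gE a b)"
proof -
  assume a: "a > 0"
  show ?thesis
  proof (rule Bochner_Integration.integrable_bound)
    show "integrable lborel (\<lambda>x. exp (- a * \<bar>x\<bar>))" using exp_abs_integrable[OF a] .
    show "AE x in lborel. norm (gE a b x) \<le> norm (exp (- a * \<bar>x\<bar>))"
      by (auto simp: gE_def norm_mult)
  qed (unfold gE_def, measurable)
qed

lemma gE_pos: "x > 0 \<Longrightarrow> gE a b x = exp ((complex_of_real (-a) + \<i> * complex_of_real b) * complex_of_real x)"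
  by (simp add: gE_def exp_of_real[symmetric] algebra_simps flip: exp_add)

lemma gE_neg: "x < 0 \<Longrightarrow> gE a b x = exp ((complex_of_real a + \<i> * complex_of_real b) * complex_of_real x)"
  by (simp add: gE_def exp_of_real[symmetric] algebra_simps flip: exp_add)

lemma exp_neg_at_top: "a > 0 \<Longrightarrow> ((\<lambda>x::real. exp (- a * x)) \<longlongrightarrow> 0) at_top"
  by (auto intro!: exp_at_bot[THEN filterlim_compose] filterlim_tendsto_pos_mult_at_top filterlim_ident
             simp: filterlim_uminus_at_bot)

lemma exp_pos_at_bot: "a > 0 \<Longrightarrow> ((\<lambda>x::real. exp (a * x)) \<longlongrightarrow> 0) at_bot"
proof -
  assume a: "a > 0"
  have "((\<lambda>x::real. exp (- a * x)) \<longlongrightarrow> 0) at_top" using exp_neg_at_top[OF a] .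
  then show ?thesis
    by (subst (asm) at_top_mirror) (simp add: filterlim_filtermap)
qed

lemma gE_fourier:
  fixes a b :: real assumes a: "a > 0"
  shows "(LINT x|lborel. gE a b x) = complex_of_real (2 * a / (a^2 + b^2))"
proof -
  define c where "c = complex_of_real (-a) + \<i> * complex_of_real b"
  define d where "d = complex_of_real a + \<i> * complex_of_real b"
  have c0: "c \<noteq> 0" using a by (auto simp: c_def complex_eq_iff)
  have d0: "d \<noteq> 0" using a by (auto simp: d_def complex_eq_iff)
  have int: "integrable lborel (gE a b)" using gE_integrable[OF a] .
  have cont: "isCont (gE a b) x" for x unfolding gE_def by (intro continuous_intros)
  have whole: "interval_lebesgue_integrable lborel (-\<infinity>) \<infinity> (gE a b)"
    using int by (simp add: interval_lebesgue_integrable_def set_integrable_def)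
  have sub: "set_integrable lborel (einterval l u) (gE a b)" for l u
    by (rule set_integrable_subset[of _ UNIV]) (use int in \<open>auto simp: set_integrable_def\<close>)
  have I1: "(LBINT x=0..\<infinity>. gE a b x) = 0 - 1 / c"
  proof (rule interval_integral_FTC_integrable[where F = "\<lambda>x. exp (c * complex_of_real x) / c"])
    show "((\<lambda>x. exp (c * complex_of_real x) / c) has_vector_derivative gE a b x) (at x)"
      if "0 < ereal x" "ereal x < \<infinity>" for x
    proof -
      have "((\<lambda>z. exp (c * z) / c) has_field_derivative exp (c * complex_of_real x)) (at (complex_of_real x))"
        using c0 by (auto intro!: derivative_eq_intros)
      from has_vector_derivative_real_field[OF this]
      show ?thesis using that gE_pos[of x a b] by (simp add: c_def)
    qed
    show "(((\<lambda>x. exp (c * complex_of_real x) / c) \<circ> real_of_ereal) \<longlongrightarrow> 1 / c) (at_right 0)"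
      unfolding zero_ereal_def ereal_tendsto_simps using c0
      by (auto intro!: tendsto_eq_intros)
    show "(((\<lambda>x. exp (c * complex_of_real x) / c) \<circ> real_of_ereal) \<longlongrightarrow> 0) (at_left \<infinity>)"
      unfolding ereal_tendsto_simps
    proof (rule tendsto_norm_zero_cancel)
      have "((\<lambda>x. exp (- a * x) / cmod c) \<longlongrightarrow> 0 / cmod c) at_top"
        by (intro tendsto_intros exp_neg_at_top[OF a]) (use c0 in simp)
      moreover have "norm (exp (c * complex_of_real x) / c) = exp (- a * x) / cmod c" for x
        by (simp add: c_def norm_divide)
      ultimately show "((\<lambda>x. norm (exp (c * complex_of_real x) / c)) \<longlongrightarrow> 0) at_top" by simp
    qed
  qed (auto simp: cont sub)
  have I2: "(LBINT x=-\<infinity>..0. gE a b x) = 1 / d - 0"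
  proof (rule interval_integral_FTC_integrable[where F = "\<lambda>x. exp (d * complex_of_real x) / d"])
    show "((\<lambda>x. exp (d * complex_of_real x) / d) has_vector_derivative gE a b x) (at x)"
      if "-\<infinity> < ereal x" "ereal x < 0" for x
    proof -
      have "((\<lambda>z. exp (d * z) / d) has_field_derivative exp (d * complex_of_real x)) (at (complex_of_real x))"
        using d0 by (auto intro!: derivative_eq_intros)
      from has_vector_derivative_real_field[OF this]
      show ?thesis using that gE_neg[of x a b] by (simp add: d_def)
    qed
    show "(((\<lambda>x. exp (d * complex_of_real x) / d) \<circ> real_of_ereal) \<longlongrightarrow> 1 / d) (at_left 0)"
      unfolding zero_ereal_def ereal_tendsto_simps using d0
      by (auto intro!: tendsto_eq_intros)
    show "(((\<lambda>x. exp (d * complex_of_real x) / d) \<circ> real_of_ereal) \<longlongrightarrow> 0) (at_right (-\<infinity>))"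
      unfolding ereal_tendsto_simps
    proof (rule tendsto_norm_zero_cancel)
      have "((\<lambda>x. exp (a * x) / cmod d) \<longlongrightarrow> 0 / cmod d) at_bot"
        by (intro tendsto_intros exp_pos_at_bot[OF a]) (use d0 in simp)
      moreover have "norm (exp (d * complex_of_real x) / d) = exp (a * x) / cmod d" for x
        by (simp add: d_def norm_divide)
      ultimately show "((\<lambda>x. norm (exp (d * complex_of_real x) / d)) \<longlongrightarrow> 0) at_bot" by simp
    qed
  qed (auto simp: cont sub)
  have "(LINT x|lborel. gE a b x) = (LBINT x=-\<infinity>..\<infinity>. gE a b x)"
    by (simp add: interval_lebesgue_integral_def set_lebesgue_integral_def)
  also have "\<dots> = (LBINT x=-\<infinity>..0. gE a b x) + (LBINT x=0..\<infinity>. gE a b x)"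
    by (rule interval_integral_sum[symmetric]) (use whole in simp)
  also have "\<dots> = 1 / d - 1 / c" using I1 I2 by simp
  also have "\<dots> = complex_of_real (2 * a / (a^2 + b^2))"
  proof -
    have dc: "d * c = - complex_of_real (a^2+b^2)"
      by (simp add: c_def d_def algebra_simps power2_eq_square)
    have cd: "c - d = - (2 * complex_of_real a)" by (simp add: c_def d_def)
    have "1 / d - 1 / c = (c - d) / (d * c)" using c0 d0 by (simp add: field_simps)
    also have "\<dots> = 2 * complex_of_real a / complex_of_real (a^2+b^2)" unfolding dc cd minus_divide_divide by simp
    finally show ?thesis by simp
  qed
  finally show ?thesis .
qed




lemma Pk_meas[measurable]: "Pk q \<in> borel_measurable borel"
  unfolding Pk_def by measurable

lemma gE_int_Pk: "a > 0 \<Longrightarrow> (LINT x|lborel. gE a b x) = complex_of_real (2 * Pk a b)"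
  by (simp add: gE_fourier Pk_def)

lemma Pk_as_int: "q > 0 \<Longrightarrow> complex_of_real (Pk q x) = (LINT s|lborel. gE q x s) / 2"
  by (simp add: gE_int_Pk)

lemma step1:
  fixes q e k :: real assumes q: "q > 0" and e: "e > 0"
  shows "(LINT x|lborel. complex_of_real (Pk q x) * exp (- \<i> * complex_of_real (k * x))
            * complex_of_real (exp (- e * \<bar>x\<bar>)))
         = complex_of_real (LINT s|lborel. exp (- q * \<bar>s\<bar>) * Pk e (s - k))"
proof -
  define C where "C x = exp (- \<i> * complex_of_real (k * x)) * complex_of_real (exp (- e * \<bar>x\<bar>)) / 2" for x
  define H where "H x s = gE q x s * C x" for x s
  have H_alt: "H x s = complex_of_real (exp (- q * \<bar>s\<bar>)) / 2 * gE e (s - k) x" for x s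
    by (simp add: H_def C_def gE_def algebra_simps flip: exp_add)
  have normH: "norm (H x s) = exp (- q * \<bar>s\<bar>) * (exp (- e * \<bar>x\<bar>) / 2)" for x s
    by (simp add: H_def C_def gE_def norm_mult norm_divide)
  have meas: "(\<lambda>(x, s). H x s) \<in> borel_measurable (lborel \<Otimes>\<^sub>M lborel)"
    unfolding H_def C_def gE_def by measurable
  have intH: "integrable (lborel \<Otimes>\<^sub>M lborel) (\<lambda>(x, s). H x s)"
  proof (rule lborel_pair.Fubini_integrable)
    show "(\<lambda>(x, s). H x s) \<in> borel_measurable (lborel \<Otimes>\<^sub>M lborel)" using meas .
    have "integrable lborel (\<lambda>x. (LINT s|lborel. exp (- q * \<bar>s\<bar>)) * (exp (- e * \<bar>x\<bar>) / 2))"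
      using exp_abs_integrable[OF e] by simp
    then show "integrable lborel (\<lambda>x. LINT s|lborel. norm (case (x, s) of (x, s) \<Rightarrow> H x s))"
      by (simp add: normH)
    show "AE x in lborel. integrable lborel (\<lambda>s. case (x, s) of (x, s) \<Rightarrow> H x s)"
    proof (rule AE_I2)
      fix x
      have "integrable lborel (\<lambda>s. exp (- q * \<bar>s\<bar>) * (exp (- e * \<bar>x\<bar>) / 2))"
        using exp_abs_integrable[OF q] by simp
      then have "integrable lborel (\<lambda>s. H x s)"
      proof (rule Bochner_Integration.integrable_bound)
        show "(\<lambda>s. H x s) \<in> borel_measurable lborel"
          unfolding H_def C_def gE_def by measurable
        show "AE s in lborel. norm (H x s) \<le> norm (exp (- q * \<bar>s\<bar>) * (exp (- e * \<bar>x\<bar>) / 2))"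
          by (intro AE_I2) (simp add: normH)
      qed
      then show "integrable lborel (\<lambda>s. case (x, s) of (x, s) \<Rightarrow> H x s)" by simp
    qed
  qed
  have "(LINT x|lborel. complex_of_real (Pk q x) * exp (- \<i> * complex_of_real (k * x))
            * complex_of_real (exp (- e * \<bar>x\<bar>)))
        = (LINT x|lborel. (LINT s|lborel. H x s))"
    by (rule Bochner_Integration.integral_cong) (simp_all add: H_def Pk_as_int[OF q] C_def)
  also have "\<dots> = (LINT s|lborel. (LINT x|lborel. H x s))"
    by (rule lborel_pair.Fubini_integral[symmetric]) (use intH in simp)
  also have "\<dots> = (LINT s|lborel. complex_of_real (exp (- q * \<bar>s\<bar>) * Pk e (s - k)))"
    by (rule Bochner_Integration.integral_cong) (simp_all add: H_alt gE_int_Pk[OF e])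
  also have "\<dots> = complex_of_real (LINT s|lborel. exp (- q * \<bar>s\<bar>) * Pk e (s - k))"
    by (simp only: integral_complex_of_real)
  finally show ?thesis .
qed

lemma step3:
  fixes q e k :: real assumes e: "e > 0"
  shows "(LINT s|lborel. exp (- q * \<bar>s\<bar>) * Pk e (s - k))
         = (LINT u|lborel. exp (- q * \<bar>k + e * u\<bar>) * inverse (1 + u^2))"
proof -
  have "(LINT s|lborel. exp (- q * \<bar>s\<bar>) * Pk e (s - k))
        = \<bar>e\<bar> *\<^sub>R (LINT u|lborel. exp (- q * \<bar>k + e * u\<bar>) * Pk e ((k + e * u) - k))"
    by (rule lborel_integral_real_affine) (use e in auto)
  also have "\<dots> = e * (LINT u|lborel. exp (- q * \<bar>k + e * u\<bar>) * inverse (1 + u^2) / e)"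
    using e by (simp add: Pk_scale)
  also have "\<dots> = (LINT u|lborel. exp (- q * \<bar>k + e * u\<bar>) * inverse (1 + u^2))"
    using e by simp
  finally show ?thesis .
qed

lemma poisson_fourier:
  fixes q k :: real assumes q: "q > 0"
  shows "(LINT x|lborel. complex_of_real (Pk q x) * exp (- \<i> * complex_of_real (k * x)))
         = complex_of_real (pi * exp (- q * \<bar>k\<bar>))"
proof -
  define e where "e n = 1 / real (Suc n)" for n
  have e: "e n > 0" for n by (simp add: e_def)
  have e0: "e \<longlonglongrightarrow> 0" unfolding e_def by (rule LIMSEQ_Suc[OF lim_const_over_n])
  define L where "L n = (LINT x|lborel. complex_of_real (Pk q x) * exp (- \<i> * complex_of_real (k * x))
            * complex_of_real (exp (- e n * \<bar>x\<bar>)))" for n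
  have lim1: "L \<longlonglongrightarrow> (LINT x|lborel. complex_of_real (Pk q x) * exp (- \<i> * complex_of_real (k * x)))"
    unfolding L_def
  proof (rule integral_dominated_convergence[where w = "Pk q"])
    show "integrable lborel (Pk q)" using Pk_integrable[OF q] .
    show "AE x in lborel. (\<lambda>n. complex_of_real (Pk q x) * exp (- \<i> * complex_of_real (k * x))
            * complex_of_real (exp (- e n * \<bar>x\<bar>))) \<longlonglongrightarrow>
          complex_of_real (Pk q x) * exp (- \<i> * complex_of_real (k * x))"
    proof (rule AE_I2)
      fix x
      have h1: "(\<lambda>n. - e n * \<bar>x\<bar>) \<longlonglongrightarrow> - 0 * \<bar>x\<bar>"
        by (rule tendsto_mult[OF tendsto_minus[OF e0] tendsto_const])
      have h2: "(\<lambda>n. exp (- e n * \<bar>x\<bar>)) \<longlonglongrightarrow> exp (- 0 * \<bar>x\<bar>)"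
        by (rule tendsto_exp[OF h1])
      have "(\<lambda>n. complex_of_real (Pk q x) * exp (- \<i> * complex_of_real (k * x))
            * complex_of_real (exp (- e n * \<bar>x\<bar>))) \<longlonglongrightarrow>
          complex_of_real (Pk q x) * exp (- \<i> * complex_of_real (k * x)) * complex_of_real (exp (- 0 * \<bar>x\<bar>))"
        by (rule tendsto_mult[OF tendsto_const tendsto_of_real[OF h2]])
      then show "(\<lambda>n. complex_of_real (Pk q x) * exp (- \<i> * complex_of_real (k * x))
            * complex_of_real (exp (- e n * \<bar>x\<bar>))) \<longlonglongrightarrow>
          complex_of_real (Pk q x) * exp (- \<i> * complex_of_real (k * x))" by simp
    qed
    show "AE x in lborel. norm (complex_of_real (Pk q x) * exp (- \<i> * complex_of_real (k * x))
            * complex_of_real (exp (- e n * \<bar>x\<bar>))) \<le> Pk q x" for n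
    proof (rule AE_I2)
      fix x
      have "exp (- e n * \<bar>x\<bar>) \<le> 1" using e[of n] by (simp add: mult_nonneg_nonneg)
      then show "norm (complex_of_real (Pk q x) * exp (- \<i> * complex_of_real (k * x))
            * complex_of_real (exp (- e n * \<bar>x\<bar>))) \<le> Pk q x"
        using Pk_nonneg[OF q, of x] by (simp add: norm_mult mult_left_le)
    qed
  qed (measurable, measurable)
  define Rn where "Rn n = (LINT u|lborel. exp (- q * \<bar>k + e n * u\<bar>) * inverse (1 + u^2))" for n
  have LR: "L n = complex_of_real (Rn n)" for n
    unfolding L_def Rn_def using step1[OF q e[of n], of k] step3[OF e[of n], of q k] by simp
  have lim2: "Rn \<longlonglongrightarrow> (LINT u|lborel. exp (- q * \<bar>k\<bar>) * inverse (1 + u^2))"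
    unfolding Rn_def
  proof (rule integral_dominated_convergence[where w = "\<lambda>u. inverse (1 + u^2)"])
    show "integrable lborel (\<lambda>u::real. inverse (1 + u^2))" using cauchy_std_int .
    show "AE x in lborel. (\<lambda>n. exp (- q * \<bar>k + e n * x\<bar>) * inverse (1 + x^2)) \<longlonglongrightarrow>
          exp (- q * \<bar>k\<bar>) * inverse (1 + x^2)"
    proof (rule AE_I2)
      fix x
      have "(\<lambda>n. exp (- q * \<bar>k + e n * x\<bar>) * inverse (1 + x^2)) \<longlonglongrightarrow>
          exp (- q * \<bar>k + 0 * x\<bar>) * inverse (1 + x^2)"
        by (intro tendsto_intros e0)
      then show "(\<lambda>n. exp (- q * \<bar>k + e n * x\<bar>) * inverse (1 + x^2)) \<longlonglongrightarrow>
          exp (- q * \<bar>k\<bar>) * inverse (1 + x^2)" by simp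
    qed
    show "AE x in lborel. norm (exp (- q * \<bar>k + e n * x\<bar>) * inverse (1 + x^2)) \<le> inverse (1 + x^2)" for n
    proof (rule AE_I2)
      fix x :: real
      have "exp (- q * \<bar>k + e n * x\<bar>) \<le> 1" using q by (simp add: mult_nonneg_nonneg)
      moreover have "inverse (1 + x^2) \<ge> 0" by (simp add: add_pos_nonneg)
      ultimately show "norm (exp (- q * \<bar>k + e n * x\<bar>) * inverse (1 + x^2)) \<le> inverse (1 + x^2)"
        by (simp add: abs_mult mult_left_le_one_le)
    qed
  qed (measurable, measurable)
  have "(LINT u|lborel. exp (- q * \<bar>k\<bar>) * inverse (1 + u^2)) = exp (- q * \<bar>k\<bar>) * pi"
    using cauchy_std(2) by simp
  with lim2 have lim2': "Rn \<longlonglongrightarrow> pi * exp (- q * \<bar>k\<bar>)" by (simp add: mult.commute)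
  have "(\<lambda>n. complex_of_real (Rn n)) \<longlonglongrightarrow> complex_of_real (pi * exp (- q * \<bar>k\<bar>))"
    by (rule tendsto_of_real[OF lim2'])
  moreover have "L = (\<lambda>n. complex_of_real (Rn n))" by (rule ext, rule LR)
  ultimately have "L \<longlonglongrightarrow> complex_of_real (pi * exp (- q * \<bar>k\<bar>))" by (simp only:)
  with lim1 show ?thesis using LIMSEQ_unique by blast
qed




lemma shift_int_Pk:
  fixes q t k :: real assumes q: "q > 0"
  shows "integrable lborel (\<lambda>y. Pk q (y - t))"
    and "(LINT y|lborel. complex_of_real (Pk q (y - t)) * exp (- \<i> * complex_of_real (k * y)))
         = exp (- \<i> * complex_of_real (k * t)) * complex_of_real (pi * exp (- q * \<bar>k\<bar>))"
proof -
  show "integrable lborel (\<lambda>y. Pk q (y - t))"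
    using lborel_integrable_real_affine_iff[of 1 "\<lambda>y. Pk q (y - t)" t] Pk_integrable[OF q] by simp
  have "(LINT y|lborel. complex_of_real (Pk q (y - t)) * exp (- \<i> * complex_of_real (k * y)))
      = \<bar>1::real\<bar> *\<^sub>R (LINT u|lborel. complex_of_real (Pk q ((t + 1 * u) - t)) * exp (- \<i> * complex_of_real (k * (t + 1 * u))))"
    by (rule lborel_integral_real_affine) simp
  also have "\<dots> = (LINT u|lborel. exp (- \<i> * complex_of_real (k * t)) * (complex_of_real (Pk q u) * exp (- \<i> * complex_of_real (k * u))))"
    by (simp add: algebra_simps exp_add[symmetric])
  also have "\<dots> = exp (- \<i> * complex_of_real (k * t)) * (LINT u|lborel. complex_of_real (Pk q u) * exp (- \<i> * complex_of_real (k * u)))"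
    by simp
  also have "\<dots> = exp (- \<i> * complex_of_real (k * t)) * complex_of_real (pi * exp (- q * \<bar>k\<bar>))"
    using poisson_fourier[OF q] by simp
  finally show "(LINT y|lborel. complex_of_real (Pk q (y - t)) * exp (- \<i> * complex_of_real (k * y)))
         = exp (- \<i> * complex_of_real (k * t)) * complex_of_real (pi * exp (- q * \<bar>k\<bar>))" .
qed

lemma conv_fourier:
  fixes q k :: real and g :: "real \<Rightarrow> complex"
  assumes q: "q > 0" and gi: "integrable lborel g"
  shows "(LINT y|lborel. (LINT t|lborel. complex_of_real (Pk q (y - t)) * g t) * exp (- \<i> * complex_of_real (k * y)))
       = complex_of_real (pi * exp (- q * \<bar>k\<bar>)) * (LINT t|lborel. g t * exp (- \<i> * complex_of_real (k * t)))"
proof -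
  have gm[measurable]: "g \<in> borel_measurable borel" using borel_measurable_integrable[OF gi] by simp
  define G where "G y t = complex_of_real (Pk q (y - t)) * g t * exp (- \<i> * complex_of_real (k * y))" for y t
  have normG: "norm (G y t) = Pk q (y - t) * norm (g t)" for y t
    using Pk_nonneg[OF q] by (simp add: G_def norm_mult)
  have measG: "(\<lambda>(t, y). G y t) \<in> borel_measurable (lborel \<Otimes>\<^sub>M lborel)"
    unfolding G_def Pk_def by measurable
  have intG': "integrable (lborel \<Otimes>\<^sub>M lborel) (\<lambda>(t, y). G y t)"
  proof (rule lborel_pair.Fubini_integrable)
    show "(\<lambda>(t, y). G y t) \<in> borel_measurable (lborel \<Otimes>\<^sub>M lborel)" using measG .
    have eqpi: "(LINT y|lborel. Pk q (y - t)) = pi" for t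
    proof -
      have "(LINT y|lborel. Pk q (y - t)) = \<bar>1::real\<bar> *\<^sub>R (LINT u|lborel. Pk q ((t + 1 * u) - t))"
        by (rule lborel_integral_real_affine) simp
      then show ?thesis using Pk_integral[OF q] by simp
    qed
    have "integrable lborel (\<lambda>t. pi * norm (g t))" using gi by simp
    then show "integrable lborel (\<lambda>t. LINT y|lborel. norm (case (t, y) of (t, y) \<Rightarrow> G y t))"
      by (simp add: normG eqpi)
    show "AE t in lborel. integrable lborel (\<lambda>y. case (t, y) of (t, y) \<Rightarrow> G y t)"
    proof (rule AE_I2)
      fix t
      have "integrable lborel (\<lambda>y. Pk q (y - t) * norm (g t))"
        using shift_int_Pk(1)[OF q, of t] by simp
      then have "integrable lborel (\<lambda>y. G y t)"
      proof (rule Bochner_Integration.integrable_bound)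
        show "(\<lambda>y. G y t) \<in> borel_measurable lborel" unfolding G_def Pk_def by measurable
        show "AE y in lborel. norm (G y t) \<le> norm (Pk q (y - t) * norm (g t))"
          using Pk_nonneg[OF q] by (intro AE_I2) (simp add: normG)
      qed
      then show "integrable lborel (\<lambda>y. case (t, y) of (t, y) \<Rightarrow> G y t)" by simp
    qed
  qed
  have intG: "integrable (lborel \<Otimes>\<^sub>M lborel) (\<lambda>(y, t). G y t)"
    using lborel_pair.integrable_product_swap[OF intG'] by simp
  have "(LINT y|lborel. (LINT t|lborel. complex_of_real (Pk q (y - t)) * g t) * exp (- \<i> * complex_of_real (k * y)))
      = (LINT y|lborel. (LINT t|lborel. G y t))"
    by (simp add: G_def)
  also have "\<dots> = (LINT t|lborel. (LINT y|lborel. G y t))"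
    by (rule lborel_pair.Fubini_integral[symmetric]) (use intG in simp)
  also have "\<dots> = (LINT t|lborel. g t * (exp (- \<i> * complex_of_real (k * t)) * complex_of_real (pi * exp (- q * \<bar>k\<bar>))))"
  proof (rule Bochner_Integration.integral_cong[OF refl])
    fix t
    have "(LINT y|lborel. G y t) = (LINT y|lborel. g t * (complex_of_real (Pk q (y - t)) * exp (- \<i> * complex_of_real (k * y))))"
      by (simp add: G_def algebra_simps)
    also have "\<dots> = g t * (exp (- \<i> * complex_of_real (k * t)) * complex_of_real (pi * exp (- q * \<bar>k\<bar>)))"
      by (simp only: integral_mult_right_zero shift_int_Pk(2)[OF q])
    finally show "(LINT y|lborel. G y t) = g t * (exp (- \<i> * complex_of_real (k * t)) * complex_of_real (pi * exp (- q * \<bar>k\<bar>)))" .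
  qed
  also have "\<dots> = (LINT t|lborel. complex_of_real (pi * exp (- q * \<bar>k\<bar>)) * (g t * exp (- \<i> * complex_of_real (k * t))))"
    by (rule Bochner_Integration.integral_cong[OF refl]) (simp only: mult_ac)
  also have "\<dots> = complex_of_real (pi * exp (- q * \<bar>k\<bar>)) * (LINT t|lborel. g t * exp (- \<i> * complex_of_real (k * t)))"
    by (rule integral_mult_right_zero)
  finally show ?thesis .
qed





lemma cmod_diff_sq: "(cmod (complex_of_real a - z))^2 = a^2 - 2 * a * Re z + (cmod z)^2"
  by (simp only: cmod_power2) (simp add: power2_eq_square algebra_simps)

lemma Re_Psi: "Re (Psi c t) = c / (c^2 + t^2)"
  by (simp add: Psi_def power2_eq_square)

lemma cmod_Psi_sq: "(cmod (Psi c t))^2 = 1 / (c^2 + t^2)"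
proof -
  have "cmod (Psi c t) = inverse (cmod (Complex c t))" by (simp add: Psi_def norm_inverse)
  then have "(cmod (Psi c t))^2 = inverse ((cmod (Complex c t))^2)" by (simp add: power_inverse)
  also have "(cmod (Complex c t))^2 = c^2 + t^2" by (simp add: cmod_power2)
  finally show ?thesis by (simp add: divide_inverse)
qed

lemma dist_Psi_sq:
  "(cmod (complex_of_real a - Psi c t))^2 = a^2 - (2 * a * c - 1) / (c^2 + t^2)"
  unfolding cmod_diff_sq Re_Psi cmod_Psi_sq by (simp add: diff_divide_distrib)

lemma Psi_circ:
  fixes a t :: real assumes a: "a > 0"
  shows "Psi (1 / (2 * a)) t \<in> circ a - {0}"
proof -
  have ac: "2 * a * (1 / (2 * a)) - 1 = 0" using a by simp
  have "(cmod (complex_of_real a - Psi (1 / (2 * a)) t))^2 = a^2"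
    unfolding dist_Psi_sq ac by simp
  then have "cmod (complex_of_real a - Psi (1 / (2 * a)) t) = a"
    using a by (metis abs_of_pos norm_ge_zero power2_eq_iff_nonneg less_imp_le)
  then have "Psi (1 / (2 * a)) t \<in> circ a" using a by (simp add: circ_def dist_norm)
  moreover have "Psi (1 / (2 * a)) t \<noteq> 0" using a by (simp add: Psi_def complex_eq_iff)
  ultimately show ?thesis by simp
qed

lemma Psi_not_circ:
  fixes r R t :: real assumes r: "0 < r" and rR: "r < R"
  shows "Psi (1 / (2 * r)) t \<notin> circ R"
proof
  assume as: "Psi (1 / (2 * r)) t \<in> circ R"
  define c where "c = 1 / (2 * r)"
  have c: "c > 0" using r by (simp add: c_def)
  have D: "c^2 + t^2 > 0" using c by (simp add: add_pos_nonneg)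
  have Rc: "2 * R * c - 1 > 0" using r rR by (simp add: c_def field_simps)
  have "cmod (complex_of_real R - Psi c t) = R"
    using as r rR by (simp add: circ_def dist_norm c_def)
  then have "(cmod (complex_of_real R - Psi c t))^2 = R^2" by simp
  then have "(2 * R * c - 1) / (c^2 + t^2) = 0" unfolding dist_Psi_sq by simp
  then show False using D Rc by simp
qed

lemma Im_inv_Psi: "Im (inverse (Psi x t)) = t"
  by (simp add: Psi_def)



lemma Pk_pos: "c > 0 \<Longrightarrow> Pk c t > 0"
  unfolding Pk_def by (intro divide_pos_pos add_pos_nonneg) auto

lemma powi_m2: "(a::real) > 0 \<Longrightarrow> (2 * a) powi (-2) = (1 / (2 * a))^2"
  by (simp only: power_int_minus power_int_numeral inverse_eq_divide power_one_over)

lemma hfun_Pk: "a > 0 \<Longrightarrow> hfun a t = 2 * a * Pk (1 / (2 * a)) t"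
proof -
  assume a: "a > 0"
  define c where "c = 1 / (2 * a)"
  have ac: "2 * a * c = 1" using a by (simp add: c_def)
  have "hfun a t = 1 / (c^2 + t^2)" unfolding hfun_def powi_m2[OF a] c_def by (rule refl)
  also have "\<dots> = (2 * a * c) / (c^2 + t^2)" by (simp only: ac)
  also have "\<dots> = 2 * a * (c / (c^2 + t^2))" by (rule times_divide_eq_right[symmetric])
  finally show ?thesis by (simp only: Pk_def c_def)
qed

lemma hfun_pos: "a > 0 \<Longrightarrow> hfun a t > 0"
proof -
  assume a: "a > 0"
  have "Pk (1 / (2 * a)) t > 0" using a by (intro Pk_pos) simp
  then show ?thesis unfolding hfun_Pk[OF a] using a by (intro mult_pos_pos) auto
qed

lemma hfun_integrable: "a > 0 \<Longrightarrow> integrable lborel (hfun a)"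
proof -
  assume a: "a > 0"
  have "integrable lborel (\<lambda>t. 2 * a * Pk (1 / (2 * a)) t)"
    using Pk_integrable[of "1 / (2 * a)"] a by simp
  moreover have "hfun a = (\<lambda>t. 2 * a * Pk (1 / (2 * a)) t)" by (rule ext) (rule hfun_Pk[OF a])
  ultimately show ?thesis by simp
qed


lemma hfun_meas: "a > 0 \<Longrightarrow> hfun a \<in> borel_measurable lborel"
  using hfun_integrable by (rule borel_measurable_integrable)

lemma fourier_conv2:
  fixes q k :: real and g :: "real \<Rightarrow> complex"
  assumes q: "q > 0" and gi: "integrable lborel g"
  shows "fourier (\<lambda>y. complex_of_real (1 / (2 * pi)) * (LINT t|lborel. complex_of_real (Pk q (y - t)) * g t)) k
       = complex_of_real (1 / 2 * exp (- \<bar>k\<bar> * q)) * fourier g k"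
proof -
  have re: "1 / (2 * pi) * (pi * exp (- q * \<bar>k\<bar>)) = 1 / 2 * exp (- \<bar>k\<bar> * q)"
    by (simp add: field_simps)
  have X: "(LINT y|lborel. complex_of_real (1 / (2 * pi)) * (LINT t|lborel. complex_of_real (Pk q (y - t)) * g t) * exp (- \<i> * complex_of_real (k * y)))
     = complex_of_real (1 / 2 * exp (- \<bar>k\<bar> * q)) * (LINT t|lborel. g t * exp (- \<i> * complex_of_real (k * t)))"
  proof -
    have "(LINT y|lborel. complex_of_real (1 / (2 * pi)) * (LINT t|lborel. complex_of_real (Pk q (y - t)) * g t) * exp (- \<i> * complex_of_real (k * y)))
     = complex_of_real (1 / (2 * pi)) * (LINT y|lborel. (LINT t|lborel. complex_of_real (Pk q (y - t)) * g t) * exp (- \<i> * complex_of_real (k * y)))"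
      by (simp add: mult.assoc)
    also have "\<dots> = complex_of_real (1 / (2 * pi)) * (complex_of_real (pi * exp (- q * \<bar>k\<bar>)) * (LINT t|lborel. g t * exp (- \<i> * complex_of_real (k * t))))"
      by (simp only: conv_fourier[OF q gi])
    also have "\<dots> = complex_of_real (1 / (2 * pi) * (pi * exp (- q * \<bar>k\<bar>))) * (LINT t|lborel. g t * exp (- \<i> * complex_of_real (k * t)))"
      by (simp only: mult.assoc of_real_mult)
    also have "\<dots> = complex_of_real (1 / 2 * exp (- \<bar>k\<bar> * q)) * (LINT t|lborel. g t * exp (- \<i> * complex_of_real (k * t)))"
      by (simp only: re)
    finally show ?thesis .
  qed
  show ?thesis unfolding fourier_def X by (simp only: mult_ac)
qed




lemma g_integrable:
  fixes a :: real and \<phi> :: "complex \<Rightarrow> complex"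
  assumes a: "a > 0" and m: "pull a \<phi> \<in> borel_measurable lborel"
    and i2: "integrable lborel (\<lambda>t. (cmod (pull a \<phi> t))\<^sup>2 * hfun a t)"
  shows "integrable lborel (\<lambda>t. pull a \<phi> t * complex_of_real (hfun a t))"
proof (rule Bochner_Integration.integrable_bound)
  show "integrable lborel (\<lambda>t. ((cmod (pull a \<phi> t))\<^sup>2 * hfun a t + hfun a t) / 2)"
    using i2 hfun_integrable[OF a] by simp
  have hm: "hfun a \<in> borel_measurable lborel" using hfun_meas[OF a] by simp
  show "(\<lambda>t. pull a \<phi> t * complex_of_real (hfun a t)) \<in> borel_measurable lborel"
    using m hm by measurable
  show "AE t in lborel. norm (pull a \<phi> t * complex_of_real (hfun a t))
          \<le> norm (((cmod (pull a \<phi> t))\<^sup>2 * hfun a t + hfun a t) / 2)"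
  proof (rule AE_I2)
    fix t
    define x where "x = cmod (pull a \<phi> t)"
    define h where "h = hfun a t"
    have h: "h > 0" using hfun_pos[OF a] by (simp add: h_def)
    have "0 \<le> (x - 1)^2 * h" using h by simp
    then have "x * h \<le> (x^2 * h + h) / 2" by (simp add: power2_eq_square algebra_simps)
    moreover have "0 \<le> (x^2 * h + h) / 2" using h by simp
    ultimately show "norm (pull a \<phi> t * complex_of_real (hfun a t))
          \<le> norm (((cmod (pull a \<phi> t))\<^sup>2 * hfun a t + hfun a t) / 2)"
      using h by (simp add: norm_mult x_def[symmetric] h_def[symmetric])
  qed
qed

lemma vec_identity:
  fixes A B c :: complex
  shows "Pmat *v vector [c * B, c * A] = c *s (Jmat ** Pmat *v vector [A, B])"
  by (simp add: vec_eq_iff forall_2 Pmat_def Jmat_def matrix_vector_mult_def matrix_matrix_mult_def sum_2 algebra_simps)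


lemma pull_K_R:
  assumes r: "0 < r" and rR: "r < R" and b0: "bdry_int R r \<phi> = 0"
  shows "complex_of_real (hfun R y) * pull R (Kstar R r \<phi>) y
       = complex_of_real (1 / (2 * pi)) * (LINT t|lborel. complex_of_real (Pk (1 / (2 * r) - 1 / (2 * R)) (y - t)) * (pull r \<phi> t * complex_of_real (hfun r t)))"
proof -
  define q where "q = 1 / (2 * r) - 1 / (2 * R)"
  have R: "R > 0" using r rR by simp
  have z: "Psi (1 / (2 * R)) y \<in> circ R - {0}" by (rule Psi_circ[OF R])
  have h: "hfun R y > 0" by (rule hfun_pos[OF R])
  have "pull R (Kstar R r \<phi>) y = complex_of_real (1 / (4 * pi * R)) * bdry_int R r \<phi> +
       complex_of_real (1 / (2 * pi * hfun R y)) *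
         (LINT t|lborel. complex_of_real (q / (q\<^sup>2 + (y - t)\<^sup>2)) * pull r \<phi> t
                           * complex_of_real (hfun r t))"
    unfolding pull_def[of R "Kstar R r \<phi>"] Kstar_def[of R r \<phi>] Let_def q_def
    using z by (simp only: Im_inv_Psi if_True)
  also have "\<dots> = complex_of_real (1 / (2 * pi * hfun R y)) *
         (LINT t|lborel. complex_of_real (Pk q (y - t)) * (pull r \<phi> t * complex_of_real (hfun r t)))"
    by (simp add: b0 Pk_def mult.assoc)
  finally have "complex_of_real (hfun R y) * pull R (Kstar R r \<phi>) y
     = (complex_of_real (hfun R y) * complex_of_real (1 / (2 * pi * hfun R y))) *
         (LINT t|lborel. complex_of_real (Pk q (y - t)) * (pull r \<phi> t * complex_of_real (hfun r t)))"
    by (simp only: mult.assoc)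
  also have "complex_of_real (hfun R y) * complex_of_real (1 / (2 * pi * hfun R y)) = complex_of_real (1 / (2 * pi))"
  proof -
    have "hfun R y * (1 / (2 * pi * hfun R y)) = 1 / (2 * pi)" using h by simp
    then show ?thesis by (simp only: of_real_mult[symmetric])
  qed
  finally show ?thesis by (simp only: q_def)
qed

lemma pull_K_r:
  assumes r: "0 < r" and rR: "r < R" and b0: "bdry_int R r \<phi> = 0"
  shows "complex_of_real (hfun r y) * pull r (Kstar R r \<phi>) y
       = complex_of_real (1 / (2 * pi)) * (LINT t|lborel. complex_of_real (Pk (1 / (2 * r) - 1 / (2 * R)) (y - t)) * (pull R \<phi> t * complex_of_real (hfun R t)))"
proof -
  define q where "q = 1 / (2 * r) - 1 / (2 * R)"
  have z: "Psi (1 / (2 * r)) y \<in> circ r - {0}" by (rule Psi_circ[OF r])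
  have z': "Psi (1 / (2 * r)) y \<notin> circ R - {0}" using Psi_not_circ[OF r rR] by simp
  have h: "hfun r y > 0" by (rule hfun_pos[OF r])
  have "pull r (Kstar R r \<phi>) y = - complex_of_real (1 / (4 * pi * r)) * bdry_int R r \<phi> +
       complex_of_real (1 / (2 * pi * hfun r y)) *
         (LINT t|lborel. complex_of_real (q / (q\<^sup>2 + (y - t)\<^sup>2)) * pull R \<phi> t
                           * complex_of_real (hfun R t))"
    unfolding pull_def[of r "Kstar R r \<phi>"] Kstar_def[of R r \<phi>] Let_def q_def
    using z z' by (simp only: Im_inv_Psi if_True if_False)
  also have "\<dots> = complex_of_real (1 / (2 * pi * hfun r y)) *
         (LINT t|lborel. complex_of_real (Pk q (y - t)) * (pull R \<phi> t * complex_of_real (hfun R t)))"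
    by (simp add: b0 Pk_def mult.assoc)
  finally have "complex_of_real (hfun r y) * pull r (Kstar R r \<phi>) y
     = (complex_of_real (hfun r y) * complex_of_real (1 / (2 * pi * hfun r y))) *
         (LINT t|lborel. complex_of_real (Pk q (y - t)) * (pull R \<phi> t * complex_of_real (hfun R t)))"
    by (simp only: mult.assoc)
  also have "complex_of_real (hfun r y) * complex_of_real (1 / (2 * pi * hfun r y)) = complex_of_real (1 / (2 * pi))"
  proof -
    have "hfun r y * (1 / (2 * pi * hfun r y)) = 1 / (2 * pi)" using h by simp
    then show ?thesis by (simp only: of_real_mult[symmetric])
  qed
  finally show ?thesis by (simp only: q_def)
qed

theorem lemma3p2:
  fixes R r :: real and \<phi> :: "complex \<Rightarrow> complex"
  assumes "0 < r" and "r < R"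
    and "L2_0_bdry R r \<phi>"
  shows "AE k in lborel.
           Pmat *v Uop R r (Kstar R r \<phi>) k =
           (complex_of_real (1 / 2 * exp (- \<bar>k\<bar> * (1 / (2 * r) - 1 / (2 * R))))) *s
             (Jmat ** Pmat *v Uop R r \<phi> k)"
proof (rule AE_I2)
  fix k :: real
  define q where "q = 1 / (2 * r) - 1 / (2 * R)"
  have r: "0 < r" and rR: "r < R" using assms by auto
  have R: "R > 0" using r rR by simp
  have q: "q > 0" using r rR by (simp add: q_def field_simps)
  have mR: "pull R \<phi> \<in> borel_measurable lborel" and mr: "pull r \<phi> \<in> borel_measurable lborel"
    and iR: "integrable lborel (\<lambda>t. (cmod (pull R \<phi> t))\<^sup>2 * hfun R t)"
    and ir: "integrable lborel (\<lambda>t. (cmod (pull r \<phi> t))\<^sup>2 * hfun r t)"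
    and b0: "bdry_int R r \<phi> = 0"
    using assms(3) unfolding L2_0_bdry_def L2_bdry_def by auto
  have giR: "integrable lborel (\<lambda>t. pull R \<phi> t * complex_of_real (hfun R t))"
    by (rule g_integrable[OF R mR iR])
  have gir: "integrable lborel (\<lambda>t. pull r \<phi> t * complex_of_real (hfun r t))"
    by (rule g_integrable[OF r mr ir])
  define c where "c = complex_of_real (1 / 2 * exp (- \<bar>k\<bar> * q))"
  define A where "A = fourier (\<lambda>t. complex_of_real (hfun R t) * pull R \<phi> t) k"
  define B where "B = fourier (\<lambda>t. complex_of_real (hfun r t) * pull r \<phi> t) k"
  have swR: "(\<lambda>t. pull R \<phi> t * complex_of_real (hfun R t)) = (\<lambda>t. complex_of_real (hfun R t) * pull R \<phi> t)"
    by (simp add: mult.commute)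
  have swr: "(\<lambda>t. pull r \<phi> t * complex_of_real (hfun r t)) = (\<lambda>t. complex_of_real (hfun r t) * pull r \<phi> t)"
    by (simp add: mult.commute)
  have c1: "fourier (\<lambda>t. complex_of_real (hfun R t) * pull R (Kstar R r \<phi>) t) k = c * B"
  proof -
    have "(\<lambda>t. complex_of_real (hfun R t) * pull R (Kstar R r \<phi>) t)
        = (\<lambda>y. complex_of_real (1 / (2 * pi)) * (LINT t|lborel. complex_of_real (Pk q (y - t)) * (pull r \<phi> t * complex_of_real (hfun r t))))"
      by (rule ext) (simp only: pull_K_R[OF r rR b0] q_def)
    then show ?thesis
      by (simp only: fourier_conv2[OF q gir] c_def B_def swr)
  qed
  have c2: "fourier (\<lambda>t. complex_of_real (hfun r t) * pull r (Kstar R r \<phi>) t) k = c * A"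
  proof -
    have "(\<lambda>t. complex_of_real (hfun r t) * pull r (Kstar R r \<phi>) t)
        = (\<lambda>y. complex_of_real (1 / (2 * pi)) * (LINT t|lborel. complex_of_real (Pk q (y - t)) * (pull R \<phi> t * complex_of_real (hfun R t))))"
      by (rule ext) (simp only: pull_K_r[OF r rR b0] q_def)
    then show ?thesis
      by (simp only: fourier_conv2[OF q giR] c_def A_def swR)
  qed
  have U1: "Uop R r (Kstar R r \<phi>) k = vector [c * B, c * A]"
    unfolding Uop_def c1 c2 ..
  have U2: "Uop R r \<phi> k = vector [A, B]"
    unfolding Uop_def A_def B_def ..
  show "Pmat *v Uop R r (Kstar R r \<phi>) k =
           (complex_of_real (1 / 2 * exp (- \<bar>k\<bar> * (1 / (2 * r) - 1 / (2 * R))))) *s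
             (Jmat ** Pmat *v Uop R r \<phi> k)"
    unfolding U1 U2 vec_identity c_def q_def ..
qed


end
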